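(* Let $N=(S,T,F,M_0,\ell)$ be a structural conflict net. If there are $\sigma\in\mathrm{Act}^*$ and $a,b,c\in\mathrm{Act}$ with $a\ne c$ such that $\langle\sigma,\{\{a,c\}\}\rangle\notin\mathcal F(N)$, $\langle\sigma,\{\{b\}\}\rangle\notin\mathcal F(N)$ and $\langle\sigma,\{\{a,b\},\{b,c\}\}\rangle\in\mathcal F(N)$, then $N$ has a fully reachable pure $\mathsf M$.
   Context: Fix visible actions $\mathrm{Act}$ and $\tau\notin\mathrm{Act}$. A Petri net has disjoint $S,T$, $F:(S\times T)\cup(T\times S)\to\mathbb N$, $M_0\in\mathbb N^S$, $\ell:T\to\mathrm{Act}\cup\{\tau\}$. ${}^\bullet x(y)=F(y,x)$, $x^\bullet(y)=F(x,y)$, extended additively; multiset $\le,\cap,\cup$ pointwise $\le$, min, max. For finite nonempty multiset $G$ of transitions, $M[G\rangle M'$ iff ${}^\bullet G\le M$ and $M'=M-{}^\bullet G+G^\bullet$; reachable markings as usual; $t\smile u$ iff $M[\{t\}+\{u\}\rangle$ for some reachable $M$. Structural conflict net: $t\smile u\Rightarrow{}^\bullet t\cap{}^\bullet u=\emptyset$. Fully reachable pure $\mathsf M$: $t,u,v\in T$ with ${}^\bullet t\cap{}^\bullet u\ne\emptyset$, ${}^\bullet u\cap{}^\bullet v\ne\emptyset$, ${}^\bullet t\cap{}^\bullet v=\emptyset$ and a reachable $M$ with ${}^\bullet t\cup{}^\bullet u\cup{}^\bullet v\le M$. $M\xrightarrow{\alpha}M'$ iff $M[t\rangle M'$ with $\ell(t)=\alpha$;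 $\Rightarrow$ reflexive transitive closure of $\xrightarrow{\tau}$; $M\overset{a_1\cdots a_n}{\Longrightarrow}M'$ iff $M\Rightarrow\xrightarrow{a_1}\Rightarrow\cdots\xrightarrow{a_n}\Rightarrow M'$. For a step $A$ (finite nonempty multiset over $\mathrm{Act}$), $M\xrightarrow{A}$ iff $M[G\rangle$ for a finite multiset $G$ of transitions, none labelled $\tau$, with label multiset $A$. $\mathcal F(N)$ consists of all $\langle\sigma,X\rangle$, $\sigma\in\mathrm{Act}^*$, $X$ a finite set of steps, such that some $M$ has $M_0\overset{\sigma}{\Longrightarrow}M$, $M\not\xrightarrow{\tau}$ and $M\not\xrightarrow{A}$ for all $A\in X$. *)

theory Defs
  imports Main "HOL-Library.Multiset"
begin

text \<open>Places have type 's, transitions type 't (so S and T are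
disjoint), visible actions type 'a; the label None plays the role of the invisible
action tau. The flow relation F is split into pre (place to transition) and
post (transition to place).\<close>

record ('s, 't, 'a) pnet =
  places :: "'s set"
  trans  :: "'t set"
  pre    :: "'s \<Rightarrow> 't \<Rightarrow> nat"
  post   :: "'t \<Rightarrow> 's \<Rightarrow> nat"
  init   :: "'s \<Rightarrow> nat"
  lab    :: "'t \<Rightarrow> 'a option"

definition petri_net :: "('s, 't, 'a) pnet \<Rightarrow> bool" where
  "petri_net N \<longleftrightarrow>
     (\<forall>s t. pre N s t \<noteq> 0 \<longrightarrow> s \<in> places N \<and> t \<in> trans N) \<and>
     (\<forall>t s. post N t s \<noteq> 0 \<longrightarrow> s \<in> places N \<and> t \<in> trans N) \<and>
     (\<forall>s. init N s \<noteq> 0 \<longrightarrow> s \<in> places N)"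

definition preset :: "('s, 't, 'a) pnet \<Rightarrow> 't \<Rightarrow> 's \<Rightarrow> nat" where
  "preset N t = (\<lambda>s. pre N s t)"

definition preset_ms :: "('s, 't, 'a) pnet \<Rightarrow> 't multiset \<Rightarrow> 's \<Rightarrow> nat" where
  "preset_ms N G = (\<lambda>s. \<Sum>\<^sub># (image_mset (\<lambda>t. pre N s t) G))"

definition postset_ms :: "('s, 't, 'a) pnet \<Rightarrow> 't multiset \<Rightarrow> 's \<Rightarrow> nat" where
  "postset_ms N G = (\<lambda>s. \<Sum>\<^sub># (image_mset (\<lambda>t. post N t s) G))"

definition fires :: "('s, 't, 'a) pnet \<Rightarrow> ('s \<Rightarrow> nat) \<Rightarrow> 't multiset \<Rightarrow> ('s \<Rightarrow> nat) \<Rightarrow> bool" where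
  "fires N M G M' \<longleftrightarrow> G \<noteq> {#} \<and> set_mset G \<subseteq> trans N \<and>
     preset_ms N G \<le> M \<and> M' = (\<lambda>s. M s - preset_ms N G s + postset_ms N G s)"

inductive reachable :: "('s, 't, 'a) pnet \<Rightarrow> ('s \<Rightarrow> nat) \<Rightarrow> bool" for N where
  init: "reachable N (init N)"
| step: "reachable N M \<Longrightarrow> fires N M {#t#} M' \<Longrightarrow> reachable N M'"

definition concurrent :: "('s, 't, 'a) pnet \<Rightarrow> 't \<Rightarrow> 't \<Rightarrow> bool" where
  "concurrent N t u \<longleftrightarrow> (\<exists>M M'. reachable N M \<and> fires N M ({#t#} + {#u#}) M')"

definition structural_conflict_net :: "('s, 't, 'a) pnet \<Rightarrow> bool" where
  "structural_conflict_net N \<longleftrightarrow> petri_net N \<and>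
     (\<forall>t u. concurrent N t u \<longrightarrow> inf (preset N t) (preset N u) = (\<lambda>_. 0))"

definition fully_reachable_pure_M :: "('s, 't, 'a) pnet \<Rightarrow> bool" where
  "fully_reachable_pure_M N \<longleftrightarrow>
     (\<exists>t\<in>trans N. \<exists>u\<in>trans N. \<exists>v\<in>trans N.
        inf (preset N t) (preset N u) \<noteq> (\<lambda>_. 0) \<and>
        inf (preset N u) (preset N v) \<noteq> (\<lambda>_. 0) \<and>
        inf (preset N t) (preset N v) = (\<lambda>_. 0) \<and>
        (\<exists>M. reachable N M \<and> sup (sup (preset N t) (preset N u)) (preset N v) \<le> M))"

definition ltrans :: "('s, 't, 'a) pnet \<Rightarrow> ('s \<Rightarrow> nat) \<Rightarrow> 'a option \<Rightarrow> ('s \<Rightarrow> nat) \<Rightarrow> bool" where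
  "ltrans N M \<alpha> M' \<longleftrightarrow> (\<exists>t. fires N M {#t#} M' \<and> lab N t = \<alpha>)"

definition tau_steps :: "('s, 't, 'a) pnet \<Rightarrow> ('s \<Rightarrow> nat) \<Rightarrow> ('s \<Rightarrow> nat) \<Rightarrow> bool" where
  "tau_steps N = (\<lambda>M M'. ltrans N M None M')\<^sup>*\<^sup>*"

fun weak :: "('s, 't, 'a) pnet \<Rightarrow> ('s \<Rightarrow> nat) \<Rightarrow> 'a list \<Rightarrow> ('s \<Rightarrow> nat) \<Rightarrow> bool" where
  "weak N M [] M' \<longleftrightarrow> tau_steps N M M'"
| "weak N M (a # \<sigma>) M' \<longleftrightarrow>
     (\<exists>M1 M2. tau_steps N M M1 \<and> ltrans N M1 (Some a) M2 \<and> weak N M2 \<sigma> M')"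

definition step_enabled :: "('s, 't, 'a) pnet \<Rightarrow> ('s \<Rightarrow> nat) \<Rightarrow> 'a multiset \<Rightarrow> bool" where
  "step_enabled N M A \<longleftrightarrow>
     (\<exists>G M'. fires N M G M' \<and> image_mset (lab N) G = image_mset Some A)"

definition failures :: "('s, 't, 'a) pnet \<Rightarrow> ('a list \<times> 'a multiset set) set" where
  "failures N = {(\<sigma>, X). finite X \<and> (\<forall>A\<in>X. A \<noteq> {#}) \<and>
     (\<exists>M. weak N (init N) \<sigma> M \<and> \<not> (\<exists>M'. ltrans N M None M') \<and>
          (\<forall>A\<in>X. \<not> step_enabled N M A))}"

end

theory Submission
  imports Defs
begin

lemma tau_reach: "tau_steps N M M' \<Longrightarrow> reachable N M \<Longrightarrow> reachable N M'"
  unfolding tau_steps_def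
  by (induction rule: rtranclp_induct) (auto simp: ltrans_def intro: reachable.step)

lemma weak_reach: "weak N M \<sigma> M' \<Longrightarrow> reachable N M \<Longrightarrow> reachable N M'"
proof (induction \<sigma> arbitrary: M)
  case Nil then show ?case using tau_reach by auto
next
  case (Cons a \<sigma>)
  then obtain M1 M2 where "tau_steps N M M1" "ltrans N M1 (Some a) M2" "weak N M2 \<sigma> M'" by auto
  moreover have "reachable N M1" using tau_reach calculation(1) Cons.prems(2) by blast
  moreover have "reachable N M2" using calculation(2,4) by (auto simp: ltrans_def intro: reachable.step)
  ultimately show ?case using Cons.IH by blast
qed

lemma img2:
  assumes "image_mset f G = {#x, y#}"
  shows "\<exists>t v. G = {#t, v#} \<and> f t = x \<and> f v = y"
proof -
  from msed_map_invR[of f G x "{#y#}"] assms obtain G1 t where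
    "G = add_mset t G1" "f t = x" "image_mset f G1 = {#y#}" by auto
  moreover from msed_map_invR[of f G1 y "{#}"] this(3) obtain G2 v where
    "G1 = add_mset v G2" "f v = y" "image_mset f G2 = {#}" by auto
  ultimately show ?thesis by auto
qed

lemma img1:
  assumes "image_mset f G = {#x#}"
  shows "\<exists>t. G = {#t#} \<and> f t = x"
proof -
  from msed_map_invR[of f G x "{#}"] assms obtain G1 t where
    "G = add_mset t G1" "f t = x" "image_mset f G1 = {#}" by auto
  then show ?thesis by auto
qed

theorem lemma5p5:
  fixes N :: "('s, 't, 'a) pnet" and \<sigma> :: "'a list" and a b c :: 'a
  assumes "structural_conflict_net N"
    and "a \<noteq> c"
    and "(\<sigma>, {{#a, c#}}) \<notin> failures N"
    and "(\<sigma>, {{#b#}}) \<notin> failures N"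
    and "(\<sigma>, {{#a, b#}, {#b, c#}}) \<in> failures N"
  shows "fully_reachable_pure_M N"
proof -
  from assms(5) obtain M where M: "weak N (init N) \<sigma> M" "\<not> (\<exists>M'. ltrans N M None M')"
    and nab: "\<not> step_enabled N M {#a, b#}" and nbc: "\<not> step_enabled N M {#b, c#}"
    unfolding failures_def by auto
  have reach: "reachable N M" using weak_reach[OF M(1)] reachable.init by blast
  have "step_enabled N M {#a, c#}" using assms(3) M unfolding failures_def by auto
  then obtain G M' where G: "fires N M G M'" "image_mset (lab N) G = image_mset Some {#a, c#}"
    unfolding step_enabled_def by blast
  then obtain t v where tv: "G = {#t, v#}" "lab N t = Some a" "lab N v = Some c"
    using img2[of "lab N" G "Some a" "Some c"] by auto
  have "step_enabled N M {#b#}" using assms(4) M unfolding failures_def by auto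
  then obtain H M'' where H: "fires N M H M''" "image_mset (lab N) H = image_mset Some {#b#}"
    unfolding step_enabled_def by blast
  then obtain u where u: "H = {#u#}" "lab N u = Some b"
    using img1[of "lab N" H] by auto
  have tin: "t \<in> trans N" and vin: "v \<in> trans N" and uin: "u \<in> trans N"
    using G(1) H(1) tv u unfolding fires_def by auto
  have tvM: "\<And>s. pre N s t + pre N s v \<le> M s"
    using G(1) tv unfolding fires_def preset_ms_def le_fun_def by auto
  have uM: "\<And>s. pre N s u \<le> M s"
    using H(1) u unfolding fires_def preset_ms_def le_fun_def by auto
  have "concurrent N t v"
    unfolding concurrent_def using reach G(1) tv
    by (metis add_mset_add_single add_mset_commute)
  hence tv0: "inf (preset N t) (preset N v) = (\<lambda>_. 0)"
    using assms(1) unfolding structural_conflict_net_def by auto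
  have tu: "inf (preset N t) (preset N u) \<noteq> (\<lambda>_. 0)"
  proof
    assume h: "inf (preset N t) (preset N u) = (\<lambda>_. 0)"
    have "\<And>s. pre N s t + pre N s u \<le> M s"
    proof -
      fix s
      have "min (pre N s t) (pre N s u) = 0" using fun_cong[OF h, of s]
        by (simp add: preset_def inf_fun_def inf_nat_def)
      then show "pre N s t + pre N s u \<le> M s" using tvM[of s] uM[of s] by linarith
    qed
    hence "fires N M {#t, u#} (\<lambda>s. M s - preset_ms N {#t, u#} s + postset_ms N {#t, u#} s)"
      using tin uin unfolding fires_def preset_ms_def le_fun_def by auto
    moreover have "image_mset (lab N) {#t, u#} = image_mset Some {#a, b#}" using tv u by simp
    ultimately show False using nab unfolding step_enabled_def by blast
  qed
  have uv: "inf (preset N u) (preset N v) \<noteq> (\<lambda>_. 0)"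
  proof
    assume h: "inf (preset N u) (preset N v) = (\<lambda>_. 0)"
    have "\<And>s. pre N s u + pre N s v \<le> M s"
    proof -
      fix s
      have "min (pre N s u) (pre N s v) = 0" using fun_cong[OF h, of s]
        by (simp add: preset_def inf_fun_def inf_nat_def)
      then show "pre N s u + pre N s v \<le> M s" using tvM[of s] uM[of s] by linarith
    qed
    hence "fires N M {#u, v#} (\<lambda>s. M s - preset_ms N {#u, v#} s + postset_ms N {#u, v#} s)"
      using vin uin unfolding fires_def preset_ms_def le_fun_def by auto
    moreover have "image_mset (lab N) {#u, v#} = image_mset Some {#b, c#}" using tv u by simp
    ultimately show False using nbc unfolding step_enabled_def by blast
  qed
  have "sup (sup (preset N t) (preset N u)) (preset N v) \<le> M"
    unfolding le_fun_def preset_def sup_fun_def using tvM uM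
    by (metis add_leE sup_nat_def max.bounded_iff)
  then show ?thesis unfolding fully_reachable_pure_M_def
    using tin uin vin tu uv tv0 reach by blast
qed

end
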